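(* Let $p,q$ be distributions on $[n]$ and $m_1,m_2>0$. Let $X_i\sim\mathrm{Poisson}(m_1p_i)$ and $Y_i\sim\mathrm{Poisson}(m_2q_i)$, $i\in[n]$, all mutually independent, and let $$Z_i=\frac{(m_2X_i-m_1Y_i)^2-(m_2^2X_i+m_1^2Y_i)}{X_i+Y_i}$$ (with $Z_i=0$ when $X_i+Y_i=0$). For $A\subseteq[n]$, if $p=q$ then $\mathbb E\left[\sum_{i\in A}Z_i\right]=0$, and in general $$\mathbb E\left[\sum_{i\in A}Z_i\right]\geq\frac{m_1^2m_2^2\left(\sum_{i\in A}|p_i-q_i|\right)^2}{4n+m_1+m_2}.$$ *)

theory Defs
  imports "HOL-Probability.Probability"
begin

text \<open>Poisson distribution with rate \<open>r \<ge> 0\<close>; the library's \<open>poisson_pmf\<close> is only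
  specified for positive rates, and Poisson(0) is the point mass at 0.\<close>
definition poisson0 :: "real \<Rightarrow> nat pmf" where
  "poisson0 r = (if 0 < r then poisson_pmf r else return_pmf 0)"

definition Zstat :: "real \<Rightarrow> real \<Rightarrow> nat \<Rightarrow> nat \<Rightarrow> real" where
  "Zstat m1 m2 x y =
     (if x + y = 0 then 0
      else ((m2 * real x - m1 * real y)^2 - (m2^2 * real x + m1^2 * real y)) / real (x + y))"

definition joint_law :: "nat \<Rightarrow> real \<Rightarrow> real \<Rightarrow> (nat \<Rightarrow> real) \<Rightarrow> (nat \<Rightarrow> real)
    \<Rightarrow> (nat \<Rightarrow> nat \<times> nat) pmf" where
  "joint_law n m1 m2 p q =
     Pi_pmf {1..n} (0, 0) (\<lambda>i. pair_pmf (poisson0 (m1 * p i)) (poisson0 (m2 * q i)))"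

definition is_distribution :: "nat \<Rightarrow> (nat \<Rightarrow> real) \<Rightarrow> bool" where
  "is_distribution n p \<longleftrightarrow> (\<forall>i\<in>{1..n}. 0 \<le> p i) \<and> (\<Sum>i=1..n. p i) = 1"

end

theory Submission
  imports Defs
begin

lemma poisson_shift:
  assumes r: "0 \<le> r"
  shows "(\<integral>\<^sup>+x. ennreal (real x) * f x \<partial>measure_pmf (poisson0 r)) =
         ennreal r * (\<integral>\<^sup>+x. f (Suc x) \<partial>measure_pmf (poisson0 r))"
proof (cases "r = 0")
  case True
  then show ?thesis by (simp add: poisson0_def)
next
  case False
  with r have rp: "0 < r" by simp
  have pm: "pmf (poisson0 r) k = r ^ k / fact k * exp (-r)" for k
    using rp by (simp add: poisson0_def)
  have key: "ennreal (pmf (poisson0 r) (Suc k)) * (ennreal (real (Suc k)) * f (Suc k))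
      = ennreal r * (ennreal (pmf (poisson0 r) k) * f (Suc k))" for k
  proof -
    have "pmf (poisson0 r) (Suc k) * real (Suc k) = r * pmf (poisson0 r) k"
      unfolding pm fact_Suc by (simp add: field_simps del: of_nat_Suc)
    then have "ennreal (pmf (poisson0 r) (Suc k)) * ennreal (real (Suc k)) = ennreal r * ennreal (pmf (poisson0 r) k)"
      using rp by (simp only: ennreal_mult[symmetric] pmf_nonneg of_nat_0_le_iff less_imp_le)
    then show ?thesis by (metis mult.assoc)
  qed
  have "(\<integral>\<^sup>+x. ennreal (real x) * f x \<partial>measure_pmf (poisson0 r)) =
        (\<Sum>k. ennreal (pmf (poisson0 r) k) * (ennreal (real k) * f k))"
    by (simp add: nn_integral_measure_pmf nn_integral_count_space_nat)
  also have "\<dots> = (\<Sum>k. ennreal (pmf (poisson0 r) (k+1)) * (ennreal (real (k+1)) * f (k+1)))"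
    by (subst suminf_offset[where i=1]) auto
  also have "\<dots> = (\<Sum>k. ennreal r * (ennreal (pmf (poisson0 r) k) * f (Suc k)))"
    using key by simp
  also have "\<dots> = ennreal r * (\<Sum>k. ennreal (pmf (poisson0 r) k) * f (Suc k))"
    by (rule ennreal_suminf_cmult)
  also have "\<dots> = ennreal r * (\<integral>\<^sup>+x. f (Suc x) \<partial>measure_pmf (poisson0 r))"
    by (simp add: nn_integral_measure_pmf nn_integral_count_space_nat)
  finally show ?thesis .
qed


abbreviation PP :: "real \<Rightarrow> real \<Rightarrow> (nat \<times> nat) pmf" where
  "PP a b \<equiv> pair_pmf (poisson0 a) (poisson0 b)"

lemma pair_shiftX:
  assumes "0 \<le> a"
  shows "(\<integral>\<^sup>+w. ennreal (real (fst w)) * g w \<partial>measure_pmf (PP a b)) =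
         ennreal a * (\<integral>\<^sup>+w. g (Suc (fst w), snd w) \<partial>measure_pmf (PP a b))"
proof -
  have "(\<integral>\<^sup>+w. ennreal (real (fst w)) * g w \<partial>measure_pmf (PP a b)) =
        (\<integral>\<^sup>+x. \<integral>\<^sup>+y. ennreal (real x) * g (x,y) \<partial>poisson0 b \<partial>poisson0 a)"
    by (simp add: nn_integral_pair_pmf')
  also have "\<dots> = (\<integral>\<^sup>+x. ennreal (real x) * (\<integral>\<^sup>+y. g (x,y) \<partial>poisson0 b) \<partial>poisson0 a)"
    by (simp add: nn_integral_cmult)
  also have "\<dots> = ennreal a * (\<integral>\<^sup>+x. (\<integral>\<^sup>+y. g (Suc x,y) \<partial>poisson0 b) \<partial>poisson0 a)"
    by (rule poisson_shift[OF assms])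
  also have "\<dots> = ennreal a * (\<integral>\<^sup>+w. g (Suc (fst w), snd w) \<partial>measure_pmf (PP a b))"
    by (simp add: nn_integral_pair_pmf')
  finally show ?thesis .
qed

lemma pair_shiftY:
  assumes "0 \<le> b"
  shows "(\<integral>\<^sup>+w. ennreal (real (snd w)) * g w \<partial>measure_pmf (PP a b)) =
         ennreal b * (\<integral>\<^sup>+w. g (fst w, Suc (snd w)) \<partial>measure_pmf (PP a b))"
proof -
  have "(\<integral>\<^sup>+w. ennreal (real (snd w)) * g w \<partial>measure_pmf (PP a b)) =
        (\<integral>\<^sup>+x. \<integral>\<^sup>+y. ennreal (real y) * g (x,y) \<partial>poisson0 b \<partial>poisson0 a)"
    by (simp add: nn_integral_pair_pmf')
  also have "\<dots> = (\<integral>\<^sup>+x. ennreal b * (\<integral>\<^sup>+y. g (x,Suc y) \<partial>poisson0 b) \<partial>poisson0 a)"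
    by (simp add: poisson_shift[OF assms])
  also have "\<dots> = ennreal b * (\<integral>\<^sup>+x. (\<integral>\<^sup>+y. g (x,Suc y) \<partial>poisson0 b) \<partial>poisson0 a)"
    by (simp add: nn_integral_cmult)
  also have "\<dots> = ennreal b * (\<integral>\<^sup>+w. g (fst w, Suc (snd w)) \<partial>measure_pmf (PP a b))"
    by (simp add: nn_integral_pair_pmf')
  finally show ?thesis .
qed


definition HH :: "nat \<times> nat \<Rightarrow> real" where
  "HH w = 1 / (real (fst w + snd w) + 2)"

lemma HH_nn_fin: "(\<integral>\<^sup>+w. ennreal (HH w) \<partial>measure_pmf M) < \<infinity>"
proof -
  have "(\<integral>\<^sup>+w. ennreal (HH w) \<partial>measure_pmf M) \<le> (\<integral>\<^sup>+w. ennreal 1 \<partial>measure_pmf M)"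
    by (intro nn_integral_mono) (auto simp: HH_def divide_simps)
  also have "\<dots> = 1" by simp
  finally show ?thesis by (simp add: le_less_trans)
qed

lemma transfer_nn:
  fixes f :: "nat \<times> nat \<Rightarrow> real"
  assumes nn: "\<And>w. 0 \<le> f w" and c: "0 \<le> c"
    and eq: "(\<integral>\<^sup>+w. ennreal (f w) \<partial>measure_pmf M) = ennreal c * (\<integral>\<^sup>+w. ennreal (HH w) \<partial>measure_pmf M)"
  shows "integrable M f" "integral\<^sup>L M f = c * integral\<^sup>L M HH"
proof -
  have fin: "(\<integral>\<^sup>+w. ennreal (f w) \<partial>measure_pmf M) < \<infinity>"
    unfolding eq using HH_nn_fin[of M] by (simp add: ennreal_mult_less_top)
  show "integrable M f" by (rule integrableI_nonneg) (use nn fin in auto)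
  have hnn: "\<And>w. 0 \<le> HH w" by (simp add: HH_def)
  have "integral\<^sup>L M f = enn2real (\<integral>\<^sup>+w. ennreal (f w) \<partial>measure_pmf M)"
    by (rule integral_eq_nn_integral) (use nn in auto)
  also have "\<dots> = c * enn2real (\<integral>\<^sup>+w. ennreal (HH w) \<partial>measure_pmf M)"
    unfolding eq using c by (simp add: enn2real_mult)
  also have "enn2real (\<integral>\<^sup>+w. ennreal (HH w) \<partial>measure_pmf M) = integral\<^sup>L M HH"
    by (rule integral_eq_nn_integral[symmetric]) (use hnn in auto)
  finally show "integral\<^sup>L M f = c * integral\<^sup>L M HH" .
qed


lemma emult: "0 \<le> x \<Longrightarrow> 0 \<le> y \<Longrightarrow> ennreal (x * y) = ennreal x * ennreal y"
  by (simp add: ennreal_mult)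

lemma N1:
  assumes a: "0 \<le> a"
  shows "(\<integral>\<^sup>+w. ennreal (real (fst w) * real (fst w - 1) / real (fst w + snd w)) \<partial>measure_pmf (PP a b))
     = ennreal (a^2) * (\<integral>\<^sup>+w. ennreal (HH w) \<partial>measure_pmf (PP a b))"
proof -
  have "(\<integral>\<^sup>+w. ennreal (real (fst w) * real (fst w - 1) / real (fst w + snd w)) \<partial>measure_pmf (PP a b))
     = (\<integral>\<^sup>+w. ennreal (real (fst w)) * ennreal (real (fst w - 1) / real (fst w + snd w)) \<partial>measure_pmf (PP a b))"
    by (simp add: emult[symmetric])
  also have "\<dots> = ennreal a * (\<integral>\<^sup>+w. ennreal (real (Suc (fst w) - 1) / real (Suc (fst w) + snd w)) \<partial>measure_pmf (PP a b))"
    using pair_shiftX[OF a, where g="\<lambda>w. ennreal (real (fst w - 1) / real (fst w + snd w))"] by simp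
  also have "(\<integral>\<^sup>+w. ennreal (real (Suc (fst w) - 1) / real (Suc (fst w) + snd w)) \<partial>measure_pmf (PP a b))
     = (\<integral>\<^sup>+w. ennreal (real (fst w)) * ennreal (1 / real (Suc (fst w) + snd w)) \<partial>measure_pmf (PP a b))"
    by (simp add: emult[symmetric])
  also have "\<dots> = ennreal a * (\<integral>\<^sup>+w. ennreal (1 / real (Suc (Suc (fst w)) + snd w)) \<partial>measure_pmf (PP a b))"
    using pair_shiftX[OF a, where g="\<lambda>w. ennreal (1 / real (Suc (fst w) + snd w))"] by simp
  also have "(\<integral>\<^sup>+w. ennreal (1 / real (Suc (Suc (fst w)) + snd w)) \<partial>measure_pmf (PP a b))
      = (\<integral>\<^sup>+w. ennreal (HH w) \<partial>measure_pmf (PP a b))"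
    by (simp add: HH_def add_ac)
  finally show ?thesis using a by (simp add: power2_eq_square emult mult.assoc)
qed

lemma N3:
  assumes b: "0 \<le> b"
  shows "(\<integral>\<^sup>+w. ennreal (real (snd w) * real (snd w - 1) / real (fst w + snd w)) \<partial>measure_pmf (PP a b))
     = ennreal (b^2) * (\<integral>\<^sup>+w. ennreal (HH w) \<partial>measure_pmf (PP a b))"
proof -
  have "(\<integral>\<^sup>+w. ennreal (real (snd w) * real (snd w - 1) / real (fst w + snd w)) \<partial>measure_pmf (PP a b))
     = (\<integral>\<^sup>+w. ennreal (real (snd w)) * ennreal (real (snd w - 1) / real (fst w + snd w)) \<partial>measure_pmf (PP a b))"
    by (simp add: emult[symmetric])
  also have "\<dots> = ennreal b * (\<integral>\<^sup>+w. ennreal (real (Suc (snd w) - 1) / real (fst w + Suc (snd w))) \<partial>measure_pmf (PP a b))"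
    using pair_shiftY[OF b, where g="\<lambda>w. ennreal (real (snd w - 1) / real (fst w + snd w))"] by simp
  also have "(\<integral>\<^sup>+w. ennreal (real (Suc (snd w) - 1) / real (fst w + Suc (snd w))) \<partial>measure_pmf (PP a b))
     = (\<integral>\<^sup>+w. ennreal (real (snd w)) * ennreal (1 / real (fst w + Suc (snd w))) \<partial>measure_pmf (PP a b))"
    by (simp add: emult[symmetric])
  also have "\<dots> = ennreal b * (\<integral>\<^sup>+w. ennreal (1 / real (fst w + Suc (Suc (snd w)))) \<partial>measure_pmf (PP a b))"
    using pair_shiftY[OF b, where g="\<lambda>w. ennreal (1 / real (fst w + Suc (snd w)))"] by simp
  also have "(\<integral>\<^sup>+w. ennreal (1 / real (fst w + Suc (Suc (snd w)))) \<partial>measure_pmf (PP a b))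
      = (\<integral>\<^sup>+w. ennreal (HH w) \<partial>measure_pmf (PP a b))"
    by (simp add: HH_def add_ac)
  finally show ?thesis using b by (simp add: power2_eq_square emult mult.assoc)
qed

lemma N2:
  assumes a: "0 \<le> a" and b: "0 \<le> b"
  shows "(\<integral>\<^sup>+w. ennreal (real (fst w) * real (snd w) / real (fst w + snd w)) \<partial>measure_pmf (PP a b))
     = ennreal (a*b) * (\<integral>\<^sup>+w. ennreal (HH w) \<partial>measure_pmf (PP a b))"
proof -
  have "(\<integral>\<^sup>+w. ennreal (real (fst w) * real (snd w) / real (fst w + snd w)) \<partial>measure_pmf (PP a b))
     = (\<integral>\<^sup>+w. ennreal (real (fst w)) * ennreal (real (snd w) / real (fst w + snd w)) \<partial>measure_pmf (PP a b))"
    by (simp add: emult[symmetric])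
  also have "\<dots> = ennreal a * (\<integral>\<^sup>+w. ennreal (real (snd w) / real (Suc (fst w) + snd w)) \<partial>measure_pmf (PP a b))"
    using pair_shiftX[OF a, where g="\<lambda>w. ennreal (real (snd w) / real (fst w + snd w))"] by simp
  also have "(\<integral>\<^sup>+w. ennreal (real (snd w) / real (Suc (fst w) + snd w)) \<partial>measure_pmf (PP a b))
     = (\<integral>\<^sup>+w. ennreal (real (snd w)) * ennreal (1 / real (Suc (fst w) + snd w)) \<partial>measure_pmf (PP a b))"
    by (simp add: emult[symmetric])
  also have "\<dots> = ennreal b * (\<integral>\<^sup>+w. ennreal (1 / real (Suc (fst w) + Suc (snd w))) \<partial>measure_pmf (PP a b))"
    using pair_shiftY[OF b, where g="\<lambda>w. ennreal (1 / real (Suc (fst w) + snd w))"] by simp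
  also have "(\<integral>\<^sup>+w. ennreal (1 / real (Suc (fst w) + Suc (snd w))) \<partial>measure_pmf (PP a b))
      = (\<integral>\<^sup>+w. ennreal (HH w) \<partial>measure_pmf (PP a b))"
    by (simp add: HH_def add_ac)
  finally show ?thesis using a b by (simp add: emult mult.assoc)
qed


lemma Efst:
  assumes a: "0 \<le> a"
  shows "integrable (PP a b) (\<lambda>w. real (fst w))" "integral\<^sup>L (PP a b) (\<lambda>w. real (fst w)) = a"
proof -
  have eq: "(\<integral>\<^sup>+w. ennreal (real (fst w)) \<partial>measure_pmf (PP a b)) = ennreal a"
    using pair_shiftX[OF a, where g="\<lambda>w. 1" and b=b] by simp
  show "integrable (PP a b) (\<lambda>w. real (fst w))"
    by (rule integrableI_nonneg) (auto simp: eq)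
  have "integral\<^sup>L (PP a b) (\<lambda>w. real (fst w)) = enn2real (\<integral>\<^sup>+w. ennreal (real (fst w)) \<partial>measure_pmf (PP a b))"
    by (rule integral_eq_nn_integral) auto
  then show "integral\<^sup>L (PP a b) (\<lambda>w. real (fst w)) = a" using a eq by simp
qed

lemma Esnd:
  assumes b: "0 \<le> b"
  shows "integrable (PP a b) (\<lambda>w. real (snd w))" "integral\<^sup>L (PP a b) (\<lambda>w. real (snd w)) = b"
proof -
  have eq: "(\<integral>\<^sup>+w. ennreal (real (snd w)) \<partial>measure_pmf (PP a b)) = ennreal b"
    using pair_shiftY[OF b, where g="\<lambda>w. 1" and a=a] by simp
  show "integrable (PP a b) (\<lambda>w. real (snd w))"
    by (rule integrableI_nonneg) (auto simp: eq)
  have "integral\<^sup>L (PP a b) (\<lambda>w. real (snd w)) = enn2real (\<integral>\<^sup>+w. ennreal (real (snd w)) \<partial>measure_pmf (PP a b))"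
    by (rule integral_eq_nn_integral) auto
  then show "integral\<^sup>L (PP a b) (\<lambda>w. real (snd w)) = b" using b eq by simp
qed

lemma HH_tangent:
  assumes c: "0 < c"
  shows "2 / c - (real (fst w) + real (snd w) + 2) / c^2 \<le> HH w"
proof -
  define u where "u = real (fst w) + real (snd w) + 2"
  have u: "0 < u" by (simp add: u_def)
  have "HH w = 1 / u" by (simp add: HH_def u_def)
  moreover have "2 / c - u / c^2 \<le> 1 / u"
  proof -
    have "0 \<le> (u - c)^2" by simp
    then have "2*u*c - u*u \<le> c*c" by (simp add: power2_eq_square algebra_simps)
    then show ?thesis using u c by (simp add: field_simps power2_eq_square)
  qed
  ultimately show ?thesis by (simp add: u_def)
qed

lemma EHH:
  assumes a: "0 \<le> a" and b: "0 \<le> b"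
  shows "1 / (a + b + 2) \<le> integral\<^sup>L (PP a b) HH"
proof -
  define c where "c = a + b + 2"
  have c: "0 < c" using a b by (simp add: c_def)
  have ih: "integrable (PP a b) HH"
    by (rule integrableI_nonneg) (use HH_nn_fin[of "PP a b"] in \<open>auto simp: HH_def\<close>)
  note i1 = Efst[OF a, of b] and i2 = Esnd[OF b, of a]
  have il: "integrable (PP a b) (\<lambda>w. 2 / c - (real (fst w) + real (snd w) + 2) / c^2)"
    using i1 i2 by auto
  have "integral\<^sup>L (PP a b) (\<lambda>w. 2 / c - (real (fst w) + real (snd w) + 2) / c^2)
       = 2 / c - (a + b + 2) / c^2"
    using i1 i2 by (simp add: integral_diff integral_add)
  also have "\<dots> = 1 / (a + b + 2)" using c unfolding c_def[symmetric] by (simp add: field_simps power2_eq_square)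
  finally have "1 / (a + b + 2) = integral\<^sup>L (PP a b) (\<lambda>w. 2 / c - (real (fst w) + real (snd w) + 2) / c^2)" ..
  also have "\<dots> \<le> integral\<^sup>L (PP a b) HH"
    by (rule integral_mono[OF il ih]) (rule HH_tangent[OF c])
  finally show ?thesis .
qed


lemma Zstat_decomp:
  "Zstat m1 m2 x y = m2^2 * (real x * real (x - 1) / real (x + y))
     - 2 * m1 * m2 * (real x * real y / real (x + y))
     + m1^2 * (real y * real (y - 1) / real (x + y))"
proof (cases "x + y = 0")
  case True then show ?thesis by (simp add: Zstat_def)
next
  case False
  have x1: "real x * real (x - 1) = real x * (real x - 1)" by (cases x) auto
  have y1: "real y * real (y - 1) = real y * (real y - 1)" by (cases y) auto
  have d: "real x + real y \<noteq> 0" using False by linarith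
  show ?thesis using False d unfolding Zstat_def x1 y1
    by (simp add: field_simps power2_eq_square del: of_nat_add)
qed

lemma comp:
  assumes a: "0 \<le> a" and b: "0 \<le> b"
  shows "integrable (PP a b) (\<lambda>w. Zstat m1 m2 (fst w) (snd w))"
    "integral\<^sup>L (PP a b) (\<lambda>w. Zstat m1 m2 (fst w) (snd w)) = (m2 * a - m1 * b)^2 * integral\<^sup>L (PP a b) HH"
proof -
  define F1 where "F1 = (\<lambda>w::nat\<times>nat. real (fst w) * real (fst w - 1) / real (fst w + snd w))"
  define F2 where "F2 = (\<lambda>w::nat\<times>nat. real (fst w) * real (snd w) / real (fst w + snd w))"
  define F3 where "F3 = (\<lambda>w::nat\<times>nat. real (snd w) * real (snd w - 1) / real (fst w + snd w))"
  have t1: "integrable (PP a b) F1" "integral\<^sup>L (PP a b) F1 = a^2 * integral\<^sup>L (PP a b) HH"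
    using transfer_nn[of F1 "a^2" "PP a b"] N1[OF a, of b] unfolding F1_def by auto
  have t2: "integrable (PP a b) F2" "integral\<^sup>L (PP a b) F2 = (a*b) * integral\<^sup>L (PP a b) HH"
    using transfer_nn[of F2 "a*b" "PP a b"] N2[OF a b] a b unfolding F2_def by auto
  have t3: "integrable (PP a b) F3" "integral\<^sup>L (PP a b) F3 = b^2 * integral\<^sup>L (PP a b) HH"
    using transfer_nn[of F3 "b^2" "PP a b"] N3[OF b, of a] unfolding F3_def by auto
  have Z: "(\<lambda>w. Zstat m1 m2 (fst w) (snd w)) = (\<lambda>w. m2^2 * F1 w - 2 * m1 * m2 * F2 w + m1^2 * F3 w)"
    by (rule ext) (simp add: Zstat_decomp F1_def F2_def F3_def)
  show "integrable (PP a b) (\<lambda>w. Zstat m1 m2 (fst w) (snd w))"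
    unfolding Z using t1 t2 t3 by auto
  have "integral\<^sup>L (PP a b) (\<lambda>w. Zstat m1 m2 (fst w) (snd w))
     = m2^2 * integral\<^sup>L (PP a b) F1 - 2 * m1 * m2 * integral\<^sup>L (PP a b) F2 + m1^2 * integral\<^sup>L (PP a b) F3"
    unfolding Z using t1 t2 t3 by (simp add: integral_add integral_diff)
  also have "\<dots> = (m2 * a - m1 * b)^2 * integral\<^sup>L (PP a b) HH"
    unfolding t1 t2 t3 by (simp add: power2_eq_square algebra_simps)
  finally show "integral\<^sup>L (PP a b) (\<lambda>w. Zstat m1 m2 (fst w) (snd w)) = (m2 * a - m1 * b)^2 * integral\<^sup>L (PP a b) HH" .
qed


lemma CS_weighted:
  fixes d w :: "nat \<Rightarrow> real"
  assumes "\<And>i. i \<in> A \<Longrightarrow> 0 < w i"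
  shows "(\<Sum>i\<in>A. \<bar>d i\<bar>)^2 \<le> (\<Sum>i\<in>A. (d i)^2 / w i) * (\<Sum>i\<in>A. w i)"
proof -
  have "(\<Sum>i\<in>A. \<bar>d i\<bar>) = (\<Sum>i\<in>A. (\<bar>d i\<bar> / sqrt (w i)) * sqrt (w i))"
  proof (intro sum.cong refl)
    fix i assume i: "i \<in> A"
    have "0 < sqrt (w i)" using assms i by simp
    then show "\<bar>d i\<bar> = \<bar>d i\<bar> / sqrt (w i) * sqrt (w i)" by simp
  qed
  then have "(\<Sum>i\<in>A. \<bar>d i\<bar>)^2 \<le> (\<Sum>i\<in>A. (\<bar>d i\<bar> / sqrt (w i))^2) * (\<Sum>i\<in>A. (sqrt (w i))^2)"
    using Cauchy_Schwarz_ineq_sum[of "\<lambda>i. \<bar>d i\<bar> / sqrt (w i)" "\<lambda>i. sqrt (w i)" A] by simp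
  also have "\<dots> = (\<Sum>i\<in>A. (d i)^2 / w i) * (\<Sum>i\<in>A. w i)"
  proof (intro arg_cong2[where f="(*)"] sum.cong refl)
    fix i assume i: "i \<in> A"
    have wi: "0 < w i" using assms i .
    show "(\<bar>d i\<bar> / sqrt (w i))^2 = (d i)^2 / w i"
      using wi by (simp add: power_divide)
    show "(sqrt (w i))^2 = w i" using wi by simp
  qed
  finally show ?thesis .
qed

theorem lemma3:
  fixes n :: nat and m1 m2 :: real and p q :: "nat \<Rightarrow> real" and A :: "nat set"
  assumes "is_distribution n p" and "is_distribution n q"
    and "0 < m1" and "0 < m2" and "A \<subseteq> {1..n}"
  shows "((\<forall>i\<in>{1..n}. p i = q i) \<longrightarrow>
           measure_pmf.expectation (joint_law n m1 m2 p q)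
             (\<lambda>\<omega>. \<Sum>i\<in>A. Zstat m1 m2 (fst (\<omega> i)) (snd (\<omega> i))) = 0) \<and>
         measure_pmf.expectation (joint_law n m1 m2 p q)
             (\<lambda>\<omega>. \<Sum>i\<in>A. Zstat m1 m2 (fst (\<omega> i)) (snd (\<omega> i)))
           \<ge> m1^2 * m2^2 * (\<Sum>i\<in>A. \<bar>p i - q i\<bar>)^2 / (4 * real n + m1 + m2)"
proof -
  note P = assms(1)[unfolded is_distribution_def] and Q = assms(2)[unfolded is_distribution_def]
  have m1: "0 < m1" and m2: "0 < m2" and A: "A \<subseteq> {1..n}" by fact+
  have finA: "finite A" using A finite_subset by blast
  define J where "J = joint_law n m1 m2 p q"
  define E where "E i = integral\<^sup>L (PP (m1 * p i) (m2 * q i)) HH" for i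
  have pn: "0 \<le> m1 * p i" and qn: "0 \<le> m2 * q i" if "i \<in> A" for i
    using that A P Q m1 m2 by auto
  have marg: "map_pmf (\<lambda>\<omega>. \<omega> i) J = PP (m1 * p i) (m2 * q i)" if "i \<in> A" for i
    using that A unfolding J_def joint_law_def by (subst Pi_pmf_component) auto
  have int_i: "integrable J (\<lambda>\<omega>. Zstat m1 m2 (fst (\<omega> i)) (snd (\<omega> i)))" if "i \<in> A" for i
  proof -
    have "integrable (map_pmf (\<lambda>\<omega>. \<omega> i) J) (\<lambda>w. Zstat m1 m2 (fst w) (snd w))"
      unfolding marg[OF that] by (rule comp(1)[OF pn[OF that] qn[OF that]])
    then show ?thesis by simp
  qed
  have val_i: "integral\<^sup>L J (\<lambda>\<omega>. Zstat m1 m2 (fst (\<omega> i)) (snd (\<omega> i)))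
      = (m1 * m2 * (p i - q i))^2 * E i" if "i \<in> A" for i
  proof -
    have "integral\<^sup>L J (\<lambda>\<omega>. Zstat m1 m2 (fst (\<omega> i)) (snd (\<omega> i)))
        = integral\<^sup>L (map_pmf (\<lambda>\<omega>. \<omega> i) J) (\<lambda>w. Zstat m1 m2 (fst w) (snd w))" by simp
    also have "\<dots> = (m2 * (m1 * p i) - m1 * (m2 * q i))^2 * E i"
      unfolding marg[OF that] E_def by (rule comp(2)[OF pn[OF that] qn[OF that]])
    finally show ?thesis by (simp add: algebra_simps)
  qed
  have total: "integral\<^sup>L J (\<lambda>\<omega>. \<Sum>i\<in>A. Zstat m1 m2 (fst (\<omega> i)) (snd (\<omega> i)))
      = (\<Sum>i\<in>A. (m1 * m2 * (p i - q i))^2 * E i)"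
    using int_i val_i by (simp add: integral_sum)
  define w where "w i = m1 * p i + m2 * q i + 2" for i
  have wpos: "0 < w i" if "i \<in> A" for i using pn[OF that] qn[OF that] by (simp add: w_def)
  have Ei: "1 / w i \<le> E i" if "i \<in> A" for i
    unfolding E_def w_def by (rule EHH[OF pn[OF that] qn[OF that]])
  define K where "K = m1^2 * m2^2"
  have K: "0 < K" using m1 m2 by (simp add: K_def)
  have low: "K * (\<Sum>i\<in>A. (p i - q i)^2 / w i) \<le> (\<Sum>i\<in>A. (m1 * m2 * (p i - q i))^2 * E i)"
    unfolding sum_distrib_left
  proof (rule sum_mono)
    fix i assume i: "i \<in> A"
    have "K * ((p i - q i)^2 / w i) = K * (p i - q i)^2 * (1 / w i)" by simp
    also have "\<dots> \<le> K * (p i - q i)^2 * E i"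
      using Ei[OF i] K by (intro mult_left_mono) auto
    finally show "K * ((p i - q i)^2 / w i) \<le> (m1 * m2 * (p i - q i))^2 * E i"
      by (simp add: K_def power_mult_distrib)
  qed
  have sp: "(\<Sum>i\<in>A. p i) \<le> 1"
  proof -
    have "(\<Sum>i\<in>A. p i) \<le> (\<Sum>i\<in>{1..n}. p i)" using A P by (intro sum_mono2) auto
    then show ?thesis using P by simp
  qed
  have sq: "(\<Sum>i\<in>A. q i) \<le> 1"
  proof -
    have "(\<Sum>i\<in>A. q i) \<le> (\<Sum>i\<in>{1..n}. q i)" using A Q by (intro sum_mono2) auto
    then show ?thesis using Q by simp
  qed
  have cA: "card A \<le> n" using card_mono[OF _ A] by simp
  have W: "(\<Sum>i\<in>A. w i) \<le> 4 * real n + m1 + m2"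
  proof -
    have "(\<Sum>i\<in>A. w i) = m1 * (\<Sum>i\<in>A. p i) + m2 * (\<Sum>i\<in>A. q i) + 2 * real (card A)"
      by (simp add: w_def sum.distrib sum_distrib_left)
    also have "\<dots> \<le> m1 * 1 + m2 * 1 + 2 * real n"
      using sp sq cA m1 m2 by (intro add_mono mult_left_mono) auto
    finally show ?thesis by simp
  qed
  define S where "S = (\<Sum>i\<in>A. (p i - q i)^2 / w i)"
  have S0: "0 \<le> S" unfolding S_def using wpos by (intro sum_nonneg) (auto intro: divide_nonneg_pos)
  have CS: "(\<Sum>i\<in>A. \<bar>p i - q i\<bar>)^2 \<le> S * (\<Sum>i\<in>A. w i)"
    unfolding S_def by (rule CS_weighted) (use wpos in auto)
  have D: "0 < 4 * real n + m1 + m2" using m1 m2 by simp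
  have "m1^2 * m2^2 * (\<Sum>i\<in>A. \<bar>p i - q i\<bar>)^2 / (4 * real n + m1 + m2)
      \<le> K * (S * (4 * real n + m1 + m2)) / (4 * real n + m1 + m2)"
    unfolding K_def[symmetric]
    using CS W S0 K D by (intro divide_right_mono mult_left_mono) (auto intro: order.trans mult_left_mono)
  also have "\<dots> = K * S" using D by simp
  also have "\<dots> \<le> (\<Sum>i\<in>A. (m1 * m2 * (p i - q i))^2 * E i)" using low by (simp add: S_def)
  finally have part2: "m1^2 * m2^2 * (\<Sum>i\<in>A. \<bar>p i - q i\<bar>)^2 / (4 * real n + m1 + m2)
      \<le> integral\<^sup>L J (\<lambda>\<omega>. \<Sum>i\<in>A. Zstat m1 m2 (fst (\<omega> i)) (snd (\<omega> i)))"
    unfolding total .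
  have part1: "(\<forall>i\<in>{1..n}. p i = q i) \<longrightarrow>
      integral\<^sup>L J (\<lambda>\<omega>. \<Sum>i\<in>A. Zstat m1 m2 (fst (\<omega> i)) (snd (\<omega> i))) = 0"
  proof
    assume h: "\<forall>i\<in>{1..n}. p i = q i"
    have "(\<Sum>i\<in>A. (m1 * m2 * (p i - q i))^2 * E i) = 0"
      using h A by (intro sum.neutral) auto
    then show "integral\<^sup>L J (\<lambda>\<omega>. \<Sum>i\<in>A. Zstat m1 m2 (fst (\<omega> i)) (snd (\<omega> i))) = 0"
      unfolding total .
  qed
  show ?thesis using part1 part2 unfolding J_def by simp
qed

end
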